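(* Let $G=(V,E)$ be a finite multigraph and suppose the vertices $v\neq w\in V$ form a 3-connection in $G$, i.e. $\lambda_G(v,w)\ge3$. If a partition $\pi$ of $V$ is such that the quotient $G^\pi$ is a cactus, then $v$ and $w$ lie in the same block of $\pi$.
   Context: $\lambda_G(v,w)$ is the minimal number of edges whose deletion disconnects $v$ and $w$ (equivalently the maximal number of edge-disjoint paths between them). $G^\pi$ identifies the vertices in each block of $\pi$. A cactus is a connected multigraph in which every edge belongs to exactly one simple cycle (loops and pairs of parallel edges count as cycles). *)

theory Defs
  imports Main "HOL-Library.Disjoint_Sets"
begin

text \<open>A finite multigraph is given by a vertex set V, an edge index set E and an
endpoint map ends; edge e joins fst (ends e) and snd (ends e) (orientation irrelevant;
loops allowed when both endpoints coincide, parallel edges allowed).\<close>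

definition multigraph :: "'a set \<Rightarrow> 'e set \<Rightarrow> ('e \<Rightarrow> 'a \<times> 'a) \<Rightarrow> bool" where
  "multigraph V E ends \<longleftrightarrow> finite V \<and> finite E \<and>
     (\<forall>e\<in>E. fst (ends e) \<in> V \<and> snd (ends e) \<in> V)"

inductive reach :: "'a set \<Rightarrow> 'e set \<Rightarrow> ('e \<Rightarrow> 'a \<times> 'a) \<Rightarrow> 'a \<Rightarrow> 'a \<Rightarrow> bool"
  for V E ends where
  refl: "x \<in> V \<Longrightarrow> reach V E ends x x"
| step: "reach V E ends x y \<Longrightarrow> e \<in> E \<Longrightarrow> (ends e = (y, z) \<or> ends e = (z, y))
          \<Longrightarrow> reach V E ends x z"

definition lambda :: "'a set \<Rightarrow> 'e set \<Rightarrow> ('e \<Rightarrow> 'a \<times> 'a) \<Rightarrow> 'a \<Rightarrow> 'a \<Rightarrow> nat" where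
  "lambda V E ends v w = (LEAST k. \<exists>F. F \<subseteq> E \<and> card F = k \<and> \<not> reach V (E - F) ends v w)"

definition connected_mg :: "'a set \<Rightarrow> 'e set \<Rightarrow> ('e \<Rightarrow> 'a \<times> 'a) \<Rightarrow> bool" where
  "connected_mg V E ends \<longleftrightarrow> (\<forall>x\<in>V. \<forall>y\<in>V. reach V E ends x y)"

text \<open>Loops (k = 1) and pairs of parallel edges (k = 2) are cycles.\<close>
definition simple_cycle :: "'a set \<Rightarrow> 'e set \<Rightarrow> ('e \<Rightarrow> 'a \<times> 'a) \<Rightarrow> 'e set \<Rightarrow> bool" where
  "simple_cycle V E ends C \<longleftrightarrow>
    (\<exists>xs es. es \<noteq> [] \<and> length xs = length es \<and> distinct xs \<and> distinct es \<and>
       set es = C \<and> set xs \<subseteq> V \<and>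
       (\<forall>i < length es. es ! i \<in> E \<and>
          (ends (es ! i) = (xs ! i, xs ! ((i + 1) mod length es)) \<or>
           ends (es ! i) = (xs ! ((i + 1) mod length es), xs ! i))))"

definition cactus :: "'a set \<Rightarrow> 'e set \<Rightarrow> ('e \<Rightarrow> 'a \<times> 'a) \<Rightarrow> bool" where
  "cactus V E ends \<longleftrightarrow> connected_mg V E ends \<and>
     (\<forall>e\<in>E. \<exists>!C. simple_cycle V E ends C \<and> e \<in> C)"

definition blk :: "'a set set \<Rightarrow> 'a \<Rightarrow> 'a set" where
  "blk pi x = (THE B. B \<in> pi \<and> x \<in> B)"

text \<open>Quotient G^pi: vertices are the blocks, same edges, endpoints mapped to blocks.\<close>
definition quot_ends :: "'a set set \<Rightarrow> ('e \<Rightarrow> 'a \<times> 'a) \<Rightarrow> 'e \<Rightarrow> 'a set \<times> 'a set" where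
  "quot_ends pi ends e = (blk pi (fst (ends e)), blk pi (snd (ends e)))"

end

theory Submission
  imports Defs
begin

definition joins :: "('e \<Rightarrow> 'a \<times> 'a) \<Rightarrow> 'e \<Rightarrow> 'a \<Rightarrow> 'a \<Rightarrow> bool" where
  "joins ends e a b \<longleftrightarrow> ends e = (a, b) \<or> ends e = (b, a)"

fun spath :: "('e \<Rightarrow> 'a \<times> 'a) \<Rightarrow> 'a list \<Rightarrow> 'e list \<Rightarrow> bool" where
  "spath ends [x] [] = True"
| "spath ends (x # y # xs) (e # es) = (joins ends e x y \<and> spath ends (y # xs) es)"
| "spath ends _ _ = False"

lemma joins_sym: "joins ends e a b \<Longrightarrow> joins ends e b a"
  by (auto simp: joins_def)

lemma spath_append:
  "spath ends ps fs \<Longrightarrow> spath ends qs gs \<Longrightarrow> joins ends e (last ps) (hd qs)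
   \<Longrightarrow> spath ends (ps @ qs) (fs @ e # gs)"
proof (induction ends ps fs rule: spath.induct)
  case (1 ends x)
  then show ?case by (cases qs) auto
next
  case (2 ends x y xs e es)
  then show ?case by auto
qed auto

lemma spath_nth:
  "spath ends xs es \<Longrightarrow> length xs = Suc (length es) \<and>
     (\<forall>i<length es. joins ends (es ! i) (xs ! i) (xs ! Suc i))"
proof (induction ends xs es rule: spath.induct)
  case (2 ends x y xs e es)
  then show ?case by (auto simp: nth_Cons split: nat.splits)
qed auto

lemma spath_ne: "spath ends xs es \<Longrightarrow> xs \<noteq> []"
  using spath_nth by fastforce

lemma spath_edge_ends:
  "spath ends xs es \<Longrightarrow> f \<in> set es \<Longrightarrow> fst (ends f) \<in> set xs \<and> snd (ends f) \<in> set xs"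
proof (induction ends xs es rule: spath.induct)
  case (2 ends x y xs e es)
  then show ?case by (auto simp: joins_def)
qed auto

lemma spath_take:
  "spath ends xs es \<Longrightarrow> i < length xs \<Longrightarrow> spath ends (take (Suc i) xs) (take i es)"
proof (induction ends xs es arbitrary: i rule: spath.induct)
  case (2 ends x y xs e es)
  then show ?case by (cases i) auto
qed auto

lemma reach_start: "reach W E' ends x y \<Longrightarrow> x \<in> W"
  by (induction rule: reach.induct) auto

lemma reach_in: "reach W E' ends x y \<Longrightarrow> (\<forall>e\<in>E'. fst (ends e) \<in> W \<and> snd (ends e) \<in> W) \<Longrightarrow> y \<in> W"
  by (induction rule: reach.induct) auto

lemma reach_trans: "reach W E' ends y z \<Longrightarrow> reach W E' ends x y \<Longrightarrow> reach W E' ends x z"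
proof (induction rule: reach.induct)
  case (refl x)
  then show ?case by simp
next
  case (step y' z' e z'')
  show ?case by (rule reach.step[OF step(4)[OF step(5)] step(2) step(3)])
qed

lemma reach_sym: "reach W E' ends x y \<Longrightarrow> (\<forall>e\<in>E'. fst (ends e) \<in> W \<and> snd (ends e) \<in> W)
   \<Longrightarrow> reach W E' ends y x"
proof (induction rule: reach.induct)
  case (refl x)
  then show ?case by (blast intro: reach.refl)
next
  case (step x y e z)
  have zW: "z \<in> W" using step(2,5) step(3) by auto
  have d: "ends e = (z, y) \<or> ends e = (y, z)" using step(3) by blast
  have zy: "reach W E' ends z y"
    using reach.refl[OF zW] step(2) d by (rule reach.step)
  have yx: "reach W E' ends y x" by (rule step(4)[OF step(5)])
  show ?case by (rule reach_trans[OF yx zy])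
qed

lemma reach_spath:
  assumes "reach W E' ends x y" "\<forall>e\<in>E'. fst (ends e) \<in> W \<and> snd (ends e) \<in> W"
  shows "\<exists>xs es. spath ends xs es \<and> hd xs = x \<and> last xs = y \<and> distinct xs \<and> distinct es
     \<and> set xs \<subseteq> W \<and> set es \<subseteq> E'"
  using assms
proof (induction rule: reach.induct)
  case (refl x)
  then show ?case by (intro exI[of _ "[x]"] exI[of _ "[]"]) auto
next
  case (step x y e z)
  then obtain xs es where P: "spath ends xs es" "hd xs = x" "last xs = y" "distinct xs" "distinct es"
     "set xs \<subseteq> W" "set es \<subseteq> E'" by blast
  have zW: "z \<in> W" using step by auto
  have je: "joins ends e y z" using step(3) by (auto simp: joins_def)
  have ne: "xs \<noteq> []" using spath_ne P(1) by blast
  show ?case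
  proof (cases "z \<in> set xs")
    case True
    then obtain i where i: "i < length xs" "xs ! i = z" by (auto simp: in_set_conv_nth)
    show ?thesis
    proof (intro exI conjI)
      show "spath ends (take (Suc i) xs) (take i es)" using spath_take P(1) i(1) by blast
      show "hd (take (Suc i) xs) = x" using P(2) ne by (simp add: hd_take)
      show "last (take (Suc i) xs) = z" using i by (simp add: take_Suc_conv_app_nth)
      show "distinct (take (Suc i) xs)" using P(4) by simp
      show "distinct (take i es)" using P(5) by simp
      show "set (take (Suc i) xs) \<subseteq> W" by (rule order_trans[OF set_take_subset P(6)])
      show "set (take i es) \<subseteq> E'" by (rule order_trans[OF set_take_subset P(7)])
    qed
  next
    case False
    have enot: "e \<notin> set es"
    proof
      assume ein: "e \<in> set es"
      have "fst (ends e) \<in> set xs \<and> snd (ends e) \<in> set xs" by (rule spath_edge_ends[OF P(1) ein])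
      then show False using False step(3) by auto
    qed
    show ?thesis
    proof (intro exI conjI)
      show "spath ends (xs @ [z]) (es @ [e])"
        using spath_append[OF P(1), of "[z]" "[]" e] je P(3) by simp
      show "hd (xs @ [z]) = x" using P(2) ne by simp
      show "last (xs @ [z]) = z" by simp
      show "distinct (xs @ [z])" using P(4) False by simp
      show "distinct (es @ [e])" using P(5) enot by simp
      show "set (xs @ [z]) \<subseteq> W" using P(6) zW by simp
      show "set (es @ [e]) \<subseteq> E'" using P(7) step(2) by simp
    qed
  qed
qed

lemma closed_spath_cycle:
  assumes "spath ends (cs @ [hd cs]) ds" "cs \<noteq> []" "distinct cs" "distinct ds"
    "set cs \<subseteq> V" "set ds \<subseteq> E"
  shows "simple_cycle V E ends (set ds)"
proof -
  from spath_nth[OF assms(1)] have L: "length cs = length ds"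
    and J: "\<forall>i<length ds. joins ends (ds ! i) ((cs @ [hd cs]) ! i) ((cs @ [hd cs]) ! Suc i)"
    by auto
  have dsne: "ds \<noteq> []" using L assms(2) by auto
  show ?thesis unfolding simple_cycle_def
  proof (intro exI[of _ cs] exI[of _ ds] conjI allI impI)
    fix i assume i: "i < length ds"
    show "ds ! i \<in> E" using i assms(6) by auto
    have a: "(cs @ [hd cs]) ! i = cs ! i" using i L by (simp add: nth_append)
    have b: "(cs @ [hd cs]) ! Suc i = cs ! ((i + 1) mod length ds)"
    proof (cases "Suc i < length ds")
      case True then show ?thesis using L by (simp add: nth_append)
    next
      case False
      then have "Suc i = length ds" using i by simp
      then show ?thesis using L assms(2) by (simp add: nth_append hd_conv_nth)
    qed
    show "ends (ds ! i) = (cs ! i, cs ! ((i + 1) mod length ds)) \<or>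
          ends (ds ! i) = (cs ! ((i + 1) mod length ds), cs ! i)"
      using J i a b by (auto simp: joins_def)
  qed (use dsne L assms(3-6) in simp_all)
qed

lemma mk_cycle:
  assumes "spath ends ps fs" "hd ps = a1" "last ps = a2" "distinct ps" "distinct fs"
   "spath ends qs gs" "hd qs = b2" "last qs = b1" "distinct qs" "distinct gs"
   "set ps \<inter> set qs = {}" "set fs \<inter> set gs = {}" "e1 \<notin> set fs \<union> set gs"
   "e2 \<notin> set fs \<union> set gs" "e1 \<noteq> e2"
   "joins ends e1 a1 b1" "joins ends e2 a2 b2" "set ps \<union> set qs \<subseteq> V"
   "set fs \<union> set gs \<union> {e1, e2} \<subseteq> E"
  shows "simple_cycle V E ends (set fs \<union> set gs \<union> {e1, e2})"
proof -
  have pne: "ps \<noteq> []" using spath_ne assms(1) by blast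
  have qne: "qs \<noteq> []" using spath_ne assms(6) by blast
  have s1: "spath ends (qs @ [a1]) (gs @ [e1])"
    using spath_append[OF assms(6), of "[a1]" "[]" e1] assms(8,16) joins_sym by fastforce
  have s2: "spath ends (ps @ (qs @ [a1])) (fs @ e2 # (gs @ [e1]))"
    using spath_append[OF assms(1) s1, of e2] assms(3,7,17) qne by simp
  have c: "simple_cycle V E ends (set (fs @ e2 # (gs @ [e1])))"
  proof (rule closed_spath_cycle[of _ "ps @ qs"])
    have "hd (ps @ qs) = a1" using pne assms(2) by simp
    then show "spath ends ((ps @ qs) @ [hd (ps @ qs)]) (fs @ e2 # gs @ [e1])" using s2 by simp
    show "ps @ qs \<noteq> []" using pne by simp
    show "distinct (ps @ qs)" using assms(4,9,11) by simp
    show "distinct (fs @ e2 # gs @ [e1])" using assms(5,10,12-15) by auto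
    show "set (ps @ qs) \<subseteq> V" using assms(18) by simp
    show "set (fs @ e2 # gs @ [e1]) \<subseteq> E" using assms(19) by auto
  qed
  have eq: "set (fs @ e2 # (gs @ [e1])) = set fs \<union> set gs \<union> {e1, e2}" by auto
  show ?thesis using c by (simp only: eq)
qed


lemma blk_props:
  assumes "partition_on V pi" "x \<in> V"
  shows "blk pi x \<in> pi \<and> x \<in> blk pi x"
proof -
  obtain B where B: "B \<in> pi" "x \<in> B" using assms unfolding partition_on_def by blast
  have dj: "disjoint pi" using assms(1) unfolding partition_on_def by blast
  have u: "B' = B" if "B' \<in> pi \<and> x \<in> B'" for B'
  proof (rule ccontr)
    assume "B' \<noteq> B"
    then have "B' \<inter> B = {}" using disjointD[OF dj] that B(1) by blast
    then show False using that B(2) by blast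
  qed
  have "blk pi x = B" unfolding blk_def
    by (rule the_equality) (use B u in blast)+
  then show ?thesis using B by simp
qed

lemma three_elems:
  assumes "finite A" "card A \<ge> 3"
  shows "\<exists>a b c. a \<in> A \<and> b \<in> A \<and> c \<in> A \<and> a \<noteq> b \<and> a \<noteq> c \<and> b \<noteq> c"
proof -
  have "A \<noteq> {}" using assms(2) by (intro notI) simp
  then obtain a where a: "a \<in> A" by blast
  have "card (A - {a}) \<ge> 2" using assms a by simp
  then have "A - {a} \<noteq> {}" by (intro notI) simp
  then obtain b where b: "b \<in> A - {a}" by blast
  have "card (A - {a} - {b}) \<ge> 1" using assms a b by (simp add: card_Diff_singleton)
  then have "A - {a} - {b} \<noteq> {}" by (intro notI) simp
  then obtain c where c: "c \<in> A - {a} - {b}" by blast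
  show ?thesis using a b c by blast
qed

theorem lemma2p5:
  fixes V :: "'a set" and E :: "'e set" and ends :: "'e \<Rightarrow> 'a \<times> 'a"
    and pi :: "'a set set" and v w :: 'a
  assumes "multigraph V E ends"
    and "v \<in> V" and "w \<in> V" and "v \<noteq> w"
    and "lambda V E ends v w \<ge> 3"
    and "partition_on V pi"
    and "cactus pi E (quot_ends pi ends)"
  shows "\<exists>B\<in>pi. v \<in> B \<and> w \<in> B"
proof (rule ccontr)
  assume nc: "\<not> (\<exists>B\<in>pi. v \<in> B \<and> w \<in> B)"
  define qe where "qe = quot_ends pi ends"
  define Bv where "Bv = blk pi v"
  define Bw where "Bw = blk pi w"
  have mg: "finite V" "finite E" "\<forall>e\<in>E. fst (ends e) \<in> V \<and> snd (ends e) \<in> V"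
    using assms(1) unfolding multigraph_def by auto
  have Bv: "Bv \<in> pi" "v \<in> Bv" using blk_props[OF assms(6) assms(2)] Bv_def by auto
  have Bw: "Bw \<in> pi" "w \<in> Bw" using blk_props[OF assms(6) assms(3)] Bw_def by auto
  have BvBw: "Bv \<noteq> Bw" using nc Bv Bw by auto
  have qe_in: "\<forall>e\<in>E. fst (qe e) \<in> pi \<and> snd (qe e) \<in> pi"
    using mg(3) blk_props[OF assms(6)] unfolding qe_def quot_ends_def by auto
  have cact: "connected_mg pi E qe" "\<forall>e\<in>E. \<exists>!C. simple_cycle pi E qe C \<and> e \<in> C"
    using assms(7) unfolding cactus_def qe_def by auto
  define EK where "EK = {e\<in>E. fst (qe e) \<noteq> Bv \<and> snd (qe e) \<noteq> Bv}"
  define K where "K = {X. reach (pi - {Bv}) EK qe Bw X}"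
  define S where "S = pi - K"
  have EK_in: "\<forall>e\<in>EK. fst (qe e) \<in> pi - {Bv} \<and> snd (qe e) \<in> pi - {Bv}"
    using qe_in unfolding EK_def by auto
  have Ksub: "K \<subseteq> pi - {Bv}"
    unfolding K_def using reach_in[OF _ EK_in] by blast
  have BwK: "Bw \<in> K" unfolding K_def using Bw BvBw by (auto intro: reach.refl)
  have BvS: "Bv \<in> S" unfolding S_def using Ksub Bv by auto
  have SK: "S \<inter> K = {}" "S \<subseteq> pi" "K \<subseteq> pi" "S \<union> K = pi"
    unfolding S_def using Ksub by auto
  define ESS where "ESS = {e\<in>E. fst (qe e) \<in> S \<and> snd (qe e) \<in> S}"
  define EKK where "EKK = {e\<in>E. fst (qe e) \<in> K \<and> snd (qe e) \<in> K}"
  have ESS_in: "\<forall>e\<in>ESS. fst (qe e) \<in> S \<and> snd (qe e) \<in> S" unfolding ESS_def by auto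
  have EKK_in: "\<forall>e\<in>EKK. fst (qe e) \<in> K \<and> snd (qe e) \<in> K" unfolding EKK_def by auto
  have Sconn0: "reach pi E qe a X \<Longrightarrow> a = Bv \<Longrightarrow> X \<in> S \<Longrightarrow> reach S ESS qe Bv X" for a X
  proof (induction rule: reach.induct)
    case (refl x)
    then show ?case by (blast intro: reach.refl)
  next
    case (step x y e z)
    have yp: "y \<in> pi" using reach_in[OF step(1) qe_in] .
    show ?case
    proof (cases "y \<in> S")
      case True
      then have "e \<in> ESS" using step unfolding ESS_def by auto
      then show ?thesis using step True by (blast intro: reach.step)
    next
      case False
      then have yK: "y \<in> K" using yp SK by auto
      show ?thesis
      proof (cases "z = Bv")
        case True
        then show ?thesis using BvS by (auto intro: reach.refl)
      next
        case False
        have "y \<noteq> Bv" using yK Ksub by auto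
        then have "e \<in> EK" using False step(2,3) unfolding EK_def by auto
        then have "z \<in> K" using yK step(3) unfolding K_def by (blast intro: reach.step)
        then show ?thesis using step(6) SK by auto
      qed
    qed
  qed
  have Sconn: "reach S ESS qe Bv X" if "X \<in> S" for X
    using Sconn0[OF _ HOL.refl that] cact(1) BvS SK that unfolding connected_mg_def by blast
  have Kconn0: "reach (pi - {Bv}) EK qe a X \<Longrightarrow> a = Bw \<Longrightarrow> reach K EKK qe Bw X" for a X
  proof (induction rule: reach.induct)
    case (refl x)
    then show ?case using BwK by (blast intro: reach.refl)
  next
    case (step x y e z)
    have yz: "y \<in> K" "z \<in> K" using step(1,2,3,5) unfolding K_def
      by (auto intro: reach.step)
    have "e \<in> E" using step(2) unfolding EK_def by auto
    then have "e \<in> EKK" using step(3) yz unfolding EKK_def by auto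
    then show ?case using step by (blast intro: reach.step)
  qed
  have Kconn: "reach K EKK qe Bw X" if "X \<in> K" for X
    using Kconn0[OF _ HOL.refl] that unfolding K_def by blast
  have Spath: "\<exists>xs es. spath qe xs es \<and> hd xs = a \<and> last xs = b \<and> distinct xs \<and> distinct es
     \<and> set xs \<subseteq> S \<and> set es \<subseteq> ESS" if "a \<in> S" "b \<in> S" for a b
  proof -
    have "reach S ESS qe a b"
      using reach_trans[OF Sconn[OF that(2)] reach_sym[OF Sconn[OF that(1)] ESS_in]] .
    then show ?thesis by (rule reach_spath[OF _ ESS_in])
  qed
  have Kpath: "\<exists>xs es. spath qe xs es \<and> hd xs = a \<and> last xs = b \<and> distinct xs \<and> distinct es
     \<and> set xs \<subseteq> K \<and> set es \<subseteq> EKK" if "a \<in> K" "b \<in> K" for a b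
  proof -
    have "reach K EKK qe a b"
      using reach_trans[OF Kconn[OF that(2)] reach_sym[OF Kconn[OF that(1)] EKK_in]] .
    then show ?thesis by (rule reach_spath[OF _ EKK_in])
  qed
  define D where "D = {e\<in>E. (fst (qe e) \<in> S \<and> snd (qe e) \<in> K) \<or> (fst (qe e) \<in> K \<and> snd (qe e) \<in> S)}"
  have Dfin: "finite D" using mg(2) unfolding D_def by auto
  have sep: "reach V E' ends x y \<Longrightarrow> E' = E - D \<Longrightarrow> blk pi x \<in> S \<Longrightarrow> blk pi y \<in> S" for E' x y
  proof (induction rule: reach.induct)
    case (refl x)
    then show ?case by simp
  next
    case (step x y e z)
    have eE: "e \<in> E" "e \<notin> D" using step by auto
    have zV: "z \<in> V" using mg(3) eE(1) step(3) by force
    have bz: "blk pi z \<in> pi" using blk_props[OF assms(6) zV] by blast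
    have by': "blk pi y \<in> S" using step(4,5,6) by blast
    have qeq: "qe e = (blk pi y, blk pi z) \<or> qe e = (blk pi z, blk pi y)"
      using step(3) unfolding qe_def quot_ends_def by auto
    show ?case
    proof (rule ccontr)
      assume "blk pi z \<notin> S"
      then have "blk pi z \<in> K" using SK(4) bz by blast
      then have "e \<in> D" using qeq eE(1) by' unfolding D_def by auto
      then show False using eE(2) by blast
    qed
  qed
  have "card D \<ge> 3"
  proof (rule ccontr)
    assume "\<not> card D \<ge> 3"
    have nr: "\<not> reach V (E - D) ends v w"
    proof
      assume "reach V (E - D) ends v w"
      then have "blk pi w \<in> S" using sep BvS Bv_def by blast
      then show False using BwK SK Bw_def by auto
    qed
    have "lambda V E ends v w \<le> card D" unfolding lambda_def
    proof (rule Least_le, intro exI conjI)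
      show "D \<subseteq> E" unfolding D_def by blast
    qed (use nr in auto)
    then show False using assms(5) \<open>\<not> card D \<ge> 3\<close> by simp
  qed
  then obtain e1 e2 e3 where e123: "e1 \<in> D" "e2 \<in> D" "e3 \<in> D" "e1 \<noteq> e2" "e1 \<noteq> e3" "e2 \<noteq> e3"
    using three_elems[OF Dfin] by blast
  have orient: "\<exists>a b. a \<in> S \<and> b \<in> K \<and> joins qe e a b" if "e \<in> D" for e
    using that unfolding D_def joins_def by (cases "qe e") auto
  have DE: "D \<subseteq> E" unfolding D_def by auto
  have Dnot: "e \<notin> ESS \<and> e \<notin> EKK" if "e \<in> D" for e
    using that SK unfolding D_def ESS_def EKK_def by auto
  have disj: "ESS \<inter> EKK = {}" using SK unfolding ESS_def EKK_def by auto
  have cyc: "\<exists>C. simple_cycle pi E qe C \<and> e \<in> C \<and> e' \<in> C \<and> C \<subseteq> {e, e'} \<union> ESS \<union> EKK"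
    if ed: "e \<in> D" "e' \<in> D" "e \<noteq> e'" for e e'
  proof -
    obtain a1 b1 where ab1: "a1 \<in> S" "b1 \<in> K" "joins qe e a1 b1" using orient[OF ed(1)] by blast
    obtain a2 b2 where ab2: "a2 \<in> S" "b2 \<in> K" "joins qe e' a2 b2" using orient[OF ed(2)] by blast
    obtain ps fs where P: "spath qe ps fs" "hd ps = a1" "last ps = a2" "distinct ps" "distinct fs"
      "set ps \<subseteq> S" "set fs \<subseteq> ESS" using Spath[OF ab1(1) ab2(1)] by blast
    obtain qs gs where Q: "spath qe qs gs" "hd qs = b2" "last qs = b1" "distinct qs" "distinct gs"
      "set qs \<subseteq> K" "set gs \<subseteq> EKK" using Kpath[OF ab2(2) ab1(2)] by blast
    have "simple_cycle pi E qe (set fs \<union> set gs \<union> {e, e'})"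
    proof (rule mk_cycle[OF P(1-5) Q(1-5)])
      show "set ps \<inter> set qs = {}" using P(6) Q(6) SK(1) by blast
      show "set fs \<inter> set gs = {}" using P(7) Q(7) disj by blast
      show "e \<notin> set fs \<union> set gs" using P(7) Q(7) Dnot[OF ed(1)] by blast
      show "e' \<notin> set fs \<union> set gs" using P(7) Q(7) Dnot[OF ed(2)] by blast
      show "e \<noteq> e'" by (rule ed(3))
      show "joins qe e a1 b1" by (rule ab1(3))
      show "joins qe e' a2 b2" by (rule ab2(3))
      show "set ps \<union> set qs \<subseteq> pi" using P(6) Q(6) SK by blast
      have "ESS \<subseteq> E" "EKK \<subseteq> E" unfolding ESS_def EKK_def by auto
      then show "set fs \<union> set gs \<union> {e, e'} \<subseteq> E" using P(7) Q(7) ed DE by blast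
    qed
    then show ?thesis using P Q by blast
  qed
  obtain C12 where C12: "simple_cycle pi E qe C12" "e1 \<in> C12" "C12 \<subseteq> {e1, e2} \<union> ESS \<union> EKK"
    using cyc[OF e123(1,2,4)] by blast
  obtain C13 where C13: "simple_cycle pi E qe C13" "e1 \<in> C13" "e3 \<in> C13"
    using cyc[OF e123(1,3,5)] by blast
  have e1E: "e1 \<in> E" using e123(1) DE by blast
  have u: "\<exists>!C. simple_cycle pi E qe C \<and> e1 \<in> C" using cact(2) e1E by blast
  have "C12 = C13" using u C12(1,2) C13(1,2) by metis
  then have "e3 \<in> {e1, e2} \<union> ESS \<union> EKK" using C12(3) C13(3) by blast
  then show False using e123(5,6) Dnot[OF e123(3)] by blast
qed

end
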